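(* Let $q$ be a prime power, let $\lambda \in \mathbb{F}_{q^n}\setminus\mathbb{F}_q$, $t = [\mathbb{F}_q(\lambda):\mathbb{F}_q]$, let $\overline{S}$ be an $\mathbb{F}_{q^t}$-subspace of $\mathbb{F}_{q^n}$ of $\mathbb{F}_{q^t}$-dimension $l>0$, $b \in \mathbb{F}_{q^n}^*$ with $\mathbb{F}_{q^t}\cap b\overline{S}=\{0\}$, $0<m<t$, $k = tl+m$ with $t+1 \le k \le n$, and $S = \overline{S} \oplus b\langle 1, \lambda, \ldots, \lambda^{m-1}\rangle_{\mathbb{F}_q}$, with $Y=\langle S\rangle_{\mathbb{F}_{q^t}} = \mathbb{F}_{q^n}$ and $2m \ge t-1$. If $\mathrm{Orb}(S)$ is an $r$-FWS code with $r = 2m+t(l-1)$, then $H(\overline{S}) = \mathbb{F}_{q^t}$.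
   Context: $\mathrm{Orb}(S)=\{\alpha S:\alpha\in\mathbb{F}_{q^n}^*\}$. For an $\mathbb{F}_q$-subspace $V$ of $\mathbb{F}_{q^n}$, the stabilizer is $H(V) = \{x \in \mathbb{F}_{q^n}^* : xV = V\} \cup \{0\}$ (a subfield of $\mathbb{F}_{q^n}$). With $d(U,V)=2k-2\dim_{\mathbb{F}_q}(U\cap V)$ and $\omega_{2i}(\mathrm{Orb}(S))=|\{\alpha S: d(S,\alpha S)=2i\}|$ for $i=1,\dots,k$, $\mathrm{Orb}(S)$ is an $r$-FWS code if $\omega_{2i}=0$ for the last $r$ indices $i=k-r+1,\ldots,k$ and $\omega_{2i}\neq 0$ for all $i=1,\ldots,k-r$. $\langle S\rangle_{\mathbb{F}_{q^t}}$ denotes the $\mathbb{F}_{q^t}$-span of $S$. *)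

theory Defs
  imports Main "HOL-Computational_Algebra.Primes"
begin

text \<open>All objects live inside a finite field 'a, playing the role of F_{q^n}.
The subfield F_{q^s} is the set of roots of X^(q^s) - X.\<close>

definition Fqs :: "nat \<Rightarrow> nat \<Rightarrow> 'a::{field,finite} set" where
  "Fqs q s = {x. x ^ (q ^ s) = x}"

definition is_subfield :: "'a::field set \<Rightarrow> bool" where
  "is_subfield K \<longleftrightarrow> 0 \<in> K \<and> 1 \<in> K \<and> (\<forall>x\<in>K. \<forall>y\<in>K. x + y \<in> K \<and> x * y \<in> K)
     \<and> (\<forall>x\<in>K. - x \<in> K \<and> inverse x \<in> K)"

definition adjoin :: "'a::field set \<Rightarrow> 'a \<Rightarrow> 'a set" where
  "adjoin K a = \<Inter>{L. is_subfield L \<and> K \<subseteq> L \<and> a \<in> L}"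

definition is_subspace :: "'a::field set \<Rightarrow> 'a set \<Rightarrow> bool" where
  "is_subspace K V \<longleftrightarrow> 0 \<in> V \<and> (\<forall>x\<in>V. \<forall>y\<in>V. x + y \<in> V) \<and> (\<forall>c\<in>K. \<forall>x\<in>V. c * x \<in> V)"

definition span_list :: "'a::field set \<Rightarrow> 'a list \<Rightarrow> 'a set" where
  "span_list K xs = {\<Sum>i<length xs. c i * xs ! i | c. \<forall>i<length xs. c i \<in> K}"

definition indep_list :: "'a::field set \<Rightarrow> 'a list \<Rightarrow> bool" where
  "indep_list K xs \<longleftrightarrow> (\<forall>c. (\<forall>i<length xs. c i \<in> K) \<longrightarrow>
      (\<Sum>i<length xs. c i * xs ! i) = 0 \<longrightarrow> (\<forall>i<length xs. c i = 0))"

definition has_dim :: "'a::field set \<Rightarrow> 'a set \<Rightarrow> nat \<Rightarrow> bool" where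
  "has_dim K V d \<longleftrightarrow> (\<exists>xs. length xs = d \<and> indep_list K xs \<and> span_list K xs = V)"

definition dimK :: "'a::field set \<Rightarrow> 'a set \<Rightarrow> nat" where
  "dimK K V = (THE d. has_dim K V d)"

definition span_set :: "'a::field set \<Rightarrow> 'a set \<Rightarrow> 'a set" where
  "span_set K A = \<Inter>{V. is_subspace K V \<and> A \<subseteq> V}"

definition scale_set :: "'a::field \<Rightarrow> 'a set \<Rightarrow> 'a set" where
  "scale_set a V = (\<lambda>x. a * x) ` V"

definition set_plus :: "'a::field set \<Rightarrow> 'a set \<Rightarrow> 'a set" where
  "set_plus U V = {u + v | u v. u \<in> U \<and> v \<in> V}"

definition stab :: "'a::field set \<Rightarrow> 'a set" where
  "stab V = {x. x \<noteq> 0 \<and> scale_set x V = V} \<union> {0}"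

definition Orb :: "'a::field set \<Rightarrow> 'a set set" where
  "Orb S = {scale_set a S | a. a \<noteq> 0}"

text \<open>Subspace distance with k = dim_{F_q} S (the common dimension in the orbit).\<close>
definition subsp_dist :: "'a::field set \<Rightarrow> nat \<Rightarrow> 'a set \<Rightarrow> 'a set \<Rightarrow> nat" where
  "subsp_dist Fq k U V = 2 * k - 2 * dimK Fq (U \<inter> V)"

definition weight :: "'a::field set \<Rightarrow> 'a set \<Rightarrow> nat \<Rightarrow> nat" where
  "weight Fq S i = card {T \<in> Orb S. subsp_dist Fq (dimK Fq S) S T = 2 * i}"

definition is_FWS :: "'a::field set \<Rightarrow> nat \<Rightarrow> 'a set \<Rightarrow> bool" where
  "is_FWS Fq r S \<longleftrightarrow> (let k = dimK Fq S in
     (\<forall>i\<in>{k - r + 1..k}. weight Fq S i = 0) \<and> (\<forall>i\<in>{1..k - r}. weight Fq S i \<noteq> 0))"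

end

theory Submission
  imports Defs "HOL-Number_Theory.Residues" "HOL-Computational_Algebra.Polynomial"
begin


lemma char_eq:
  assumes "prime p" "e > 0" "card (UNIV::'a::{field,finite} set) = (p^e)^n" "n > 0"
  shows "CHAR('a) = p"
proof -
  have pc: "prime CHAR('a)"
    by (rule prime_CHAR_semidom, rule finite_imp_CHAR_pos) simp
  have "CHAR('a) dvd p^(e*n)" using CHAR_dvd_CARD[where ?'a='a] assms by (simp add: power_mult)
  then have "CHAR('a) dvd p" using prime_dvd_power pc by blast
  then show ?thesis using pc assms(1) primes_dvd_imp_eq by blast
qed

lemma frob_add:
  assumes "CHAR('a::{field,finite}) = p" "prime p" "q = p^e"
  shows "((x::'a) + y)^(q^s) = x^(q^s) + y^(q^s)"
  by (rule freshmans_dream') (use assms in \<open>simp_all add: power_mult[symmetric]\<close>)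

lemma Fqs_subfield:
  assumes "CHAR('a::{field,finite}) = p" "prime p" "q = p^e"
  shows "is_subfield (Fqs q s :: 'a set)"
proof -
  have qpos: "q^s > 0" using assms prime_gt_0_nat by simp
  have add: "((x::'a) + y)^(q^s) = x^(q^s) + y^(q^s)" for x y using frob_add[OF assms] .
  have "(0::'a) = (1 + (-1::'a))^(q^s)" using qpos by simp
  also have "\<dots> = 1 + (-1)^(q^s)" using add[of 1 "-1"] by simp
  finally have m1: "(-1::'a)^(q^s) = -1" by (metis add_eq_0_iff)
  show ?thesis unfolding is_subfield_def Fqs_def
  proof (intro conjI ballI)
    fix x y :: 'a assume x: "x \<in> {x. x^(q^s) = x}" and y: "y \<in> {x. x^(q^s) = x}"
    show "x + y \<in> {x. x^(q^s) = x}" using x y add by simp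
    show "x * y \<in> {x. x^(q^s) = x}" using x y by (simp add: power_mult_distrib)
  next
    fix x :: 'a assume x: "x \<in> {x. x^(q^s) = x}"
    have "(-x)^(q^s) = (-1)^(q^s) * x^(q^s)" by (metis mult_minus1 power_mult_distrib)
    then show "-x \<in> {x. x^(q^s) = x}" using x m1 by simp
    show "inverse x \<in> {x. x^(q^s) = x}" using x by (simp add: power_inverse)
  qed (use qpos in auto)
qed

lemma subfield_power_card:
  fixes K :: "'a::{field,finite} set"
  assumes K: "is_subfield K" and x: "x \<in> K"
  shows "x ^ card K = x"
proof (cases "x = 0")
  case True
  have "card K > 0" using K by (auto simp: is_subfield_def card_gt_0_iff)
  then show ?thesis using True by simp
next
  case False
  have fin: "finite (K - {0})" by simp
  have "(\<Prod>y\<in>K-{0}. x * y) = x ^ card (K - {0}) * \<Prod>(K-{0})"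
    by (simp add: prod.distrib)
  moreover have "(\<Prod>y\<in>K-{0}. x * y) = (\<Prod>y\<in>K-{0}. y)"
  proof (rule prod.reindex_bij_witness[of _ "\<lambda>y. y / x" "\<lambda>y. x * y"])
    fix a assume "a \<in> K - {0}"
    then show "a / x \<in> K - {0}" using K x False
      by (auto simp: is_subfield_def divide_inverse)
  next
    fix a assume "a \<in> K - {0}"
    then show "x * a \<in> K - {0}" using K x False by (auto simp: is_subfield_def)
  qed (use False in auto)
  moreover have "\<Prod>(K-{0}) \<noteq> 0" by simp
  ultimately have "x ^ card (K - {0}) = 1" by simp
  moreover have "card (K - {0}) = card K - 1" using K by (simp add: is_subfield_def)
  moreover have "card K > 0" using K by (auto simp: is_subfield_def card_gt_0_iff)
  ultimately show ?thesis
    by (metis Suc_diff_1 mult.right_neutral power_Suc)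
qed

lemma subfield_card_ge2:
  assumes "is_subfield (K :: 'a::{field,finite} set)"
  shows "card K \<ge> 2"
proof -
  have "{0,1} \<subseteq> K" using assms by (auto simp: is_subfield_def)
  then have "card {0::'a,1} \<le> card K" by (intro card_mono) auto
  then show ?thesis by simp
qed



lemma sum_in_closed:
  assumes "0 \<in> V" "\<forall>x\<in>V. \<forall>y\<in>V. x + y \<in> V" "finite A" "\<forall>i\<in>A. f i \<in> V"
  shows "sum f A \<in> V"
  using assms(3,4)
proof (induction A rule: finite_induct)
  case empty then show ?case using assms(1) by simp
next
  case (insert x F) then show ?case using assms(2) by simp
qed

lemma span_list_image:
  "span_list F xs = (\<lambda>c. \<Sum>i<length xs. c i * xs ! i) ` (PiE {..<length xs} (\<lambda>_. F))"
proof
  show "span_list F xs \<subseteq> (\<lambda>c. \<Sum>i<length xs. c i * xs ! i) ` (PiE {..<length xs} (\<lambda>_. F))"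
  proof
    fix v assume "v \<in> span_list F xs"
    then obtain c where c: "\<forall>i<length xs. c i \<in> F" and v: "v = (\<Sum>i<length xs. c i * xs ! i)"
      unfolding span_list_def by blast
    have "restrict c {..<length xs} \<in> PiE {..<length xs} (\<lambda>_. F)" using c by auto
    moreover have "v = (\<Sum>i<length xs. restrict c {..<length xs} i * xs ! i)"
      using v by (auto intro: sum.cong)
    ultimately show "v \<in> (\<lambda>c. \<Sum>i<length xs. c i * xs ! i) ` (PiE {..<length xs} (\<lambda>_. F))"
      by blast
  qed
next
  show "(\<lambda>c. \<Sum>i<length xs. c i * xs ! i) ` (PiE {..<length xs} (\<lambda>_. F)) \<subseteq> span_list F xs"
    unfolding span_list_def by (auto simp: PiE_def Pi_def)
qed

lemma card_span_indep:
  fixes F :: "'a::{field,finite} set"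
  assumes F: "is_subfield F" and ind: "indep_list F xs"
  shows "card (span_list F xs) = card F ^ length xs"
proof -
  let ?P = "PiE {..<length xs} (\<lambda>_. F)"
  let ?f = "\<lambda>c. \<Sum>i<length xs. c i * xs ! i"
  have inj: "inj_on ?f ?P"
  proof (rule inj_onI)
    fix c d assume c: "c \<in> ?P" and d: "d \<in> ?P" and eq: "?f c = ?f d"
    let ?e = "\<lambda>i. c i - d i"
    have eF: "\<forall>i<length xs. ?e i \<in> F"
    proof (intro allI impI)
      fix i assume i: "i < length xs"
      have "c i \<in> F" "d i \<in> F" using c d i by (auto simp: PiE_iff)
      then have "c i + - d i \<in> F" using F unfolding is_subfield_def by blast
      then show "?e i \<in> F" by simp
    qed
    have "(\<Sum>i<length xs. ?e i * xs ! i) = ?f c - ?f d"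
      by (simp add: sum_subtractf left_diff_distrib)
    then have "(\<Sum>i<length xs. ?e i * xs ! i) = 0" using eq by simp
    moreover have "(\<forall>i<length xs. ?e i \<in> F) \<longrightarrow> (\<Sum>i<length xs. ?e i * xs ! i) = 0 \<longrightarrow> (\<forall>i<length xs. ?e i = 0)"
      using ind unfolding indep_list_def by (rule spec)
    ultimately have "\<forall>i<length xs. ?e i = 0" using eF by blast
    then show "c = d" using c d by (intro PiE_ext[OF c d]) simp
  qed
  have "card (span_list F xs) = card ?P"
    unfolding span_list_image using card_image[OF inj] by simp
  also have "\<dots> = card F ^ length xs" by (simp add: card_PiE)
  finally show ?thesis .
qed

lemma span_sub:
  assumes V: "is_subspace F V" and xs: "set xs \<subseteq> V"
  shows "span_list F xs \<subseteq> V"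
proof
  fix v assume "v \<in> span_list F xs"
  then obtain c where c: "\<forall>i<length xs. c i \<in> F" and v: "v = (\<Sum>i<length xs. c i * xs ! i)"
    unfolding span_list_def by blast
  have "\<forall>i\<in>{..<length xs}. c i * xs ! i \<in> V" using c xs V
    unfolding is_subspace_def by (meson lessThan_iff nth_mem subsetD)
  then show "v \<in> V" unfolding v using V by (intro sum_in_closed) (auto simp: is_subspace_def)
qed

lemma span_append_mono:
  assumes "0 \<in> F"
  shows "span_list F xs \<subseteq> span_list F (xs @ [v])"
proof
  fix w assume "w \<in> span_list F xs"
  then obtain c where c: "\<forall>i<length xs. c i \<in> F" and w: "w = (\<Sum>i<length xs. c i * xs ! i)"
    unfolding span_list_def by blast
  let ?c = "c(length xs := 0)"
  have "(\<Sum>i<length (xs@[v]). ?c i * (xs@[v]) ! i) = (\<Sum>i<length xs. ?c i * (xs@[v]) ! i)"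
    by simp
  also have "\<dots> = w" unfolding w by (intro sum.cong) (auto simp: nth_append)
  finally show "w \<in> span_list F (xs @ [v])"
    unfolding span_list_def using c assms
    by (intro CollectI exI[of _ ?c]) (auto simp: less_Suc_eq)
qed

lemma span_append_in:
  assumes "0 \<in> F" "1 \<in> F"
  shows "v \<in> span_list F (xs @ [v])"
proof -
  let ?c = "\<lambda>i. if i = length xs then 1 else (0::'a::field)"
  have "(\<Sum>i<length (xs@[v]). ?c i * (xs@[v]) ! i) = v"
    by (simp add: sum.delta' nth_append)
  then show ?thesis unfolding span_list_def using assms
    by (intro CollectI exI[of _ ?c]) auto
qed

lemma indep_append:
  fixes F :: "'a::field set"
  assumes F: "is_subfield F" and ind: "indep_list F xs" and v: "v \<notin> span_list F xs"
  shows "indep_list F (xs @ [v])"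
  unfolding indep_list_def
proof (rule allI, rule impI, rule impI)
  fix c assume cF: "\<forall>i<length (xs @ [v]). c i \<in> F"
    and s: "(\<Sum>i<length (xs @ [v]). c i * (xs @ [v]) ! i) = 0"
  let ?n = "length xs"
  have s': "(\<Sum>i<?n. c i * xs ! i) + c ?n * v = 0"
  proof -
    have "(\<Sum>i<length (xs @ [v]). c i * (xs @ [v]) ! i) = (\<Sum>i<?n. c i * (xs@[v]) ! i) + c ?n * v"
      by simp
    also have "(\<Sum>i<?n. c i * (xs@[v]) ! i) = (\<Sum>i<?n. c i * xs ! i)"
      by (intro sum.cong) (auto simp: nth_append)
    finally show ?thesis using s by simp
  qed
  have cn: "c ?n = 0"
  proof (rule ccontr)
    assume nz: "c ?n \<noteq> 0"
    let ?d = "\<lambda>i. - c i * inverse (c ?n)"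
    have dF: "\<forall>i<?n. ?d i \<in> F"
    proof (intro allI impI)
      fix i assume i: "i < ?n"
      have "c i \<in> F" "c ?n \<in> F" using cF i by auto
      then show "?d i \<in> F" using F unfolding is_subfield_def by blast
    qed
    have "v = (\<Sum>i<?n. ?d i * xs ! i)"
    proof -
      have "c ?n * v = - (\<Sum>i<?n. c i * xs ! i)" using s' by (simp add: eq_neg_iff_add_eq_0 add.commute)
      then have "v = inverse (c ?n) * (- (\<Sum>i<?n. c i * xs ! i))" using nz
        by (metis mult.assoc mult.left_neutral left_inverse)
      also have "\<dots> = (\<Sum>i<?n. ?d i * xs ! i)"
        by (simp add: sum_distrib_left sum_negf mult_ac)
      finally show ?thesis .
    qed
    then have "v \<in> span_list F xs" unfolding span_list_def using dF by (intro CollectI exI[of _ ?d]) simp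
    then show False using v by simp
  qed
  then have "(\<Sum>i<?n. c i * xs ! i) = 0" using s' by simp
  moreover have "(\<forall>i<?n. c i \<in> F) \<longrightarrow> (\<Sum>i<?n. c i * xs ! i) = 0 \<longrightarrow> (\<forall>i<?n. c i = 0)"
    using ind unfolding indep_list_def by (rule spec)
  moreover have "\<forall>i<?n. c i \<in> F" using cF by simp
  ultimately have "\<forall>i<?n. c i = 0" by blast
  then show "\<forall>i<length (xs @ [v]). c i = 0" using cn by (simp add: less_Suc_eq)
qed

lemma basis_exists:
  fixes F V :: "'a::{field,finite} set"
  assumes F: "is_subfield F" and V: "is_subspace F V"
  shows "\<exists>xs. indep_list F xs \<and> span_list F xs = V"
proof -
  have main: "\<And>xs. indep_list F xs \<Longrightarrow> set xs \<subseteq> V \<Longrightarrow> \<exists>ys. indep_list F ys \<and> span_list F ys = V"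
  proof -
    fix xs
    show "indep_list F xs \<Longrightarrow> set xs \<subseteq> V \<Longrightarrow> \<exists>ys. indep_list F ys \<and> span_list F ys = V"
    proof (induction "card (UNIV::'a set) - card (span_list F xs)" arbitrary: xs rule: less_induct)
      case (less xs)
      have sub: "span_list F xs \<subseteq> V" using span_sub[OF V less.prems(2)] .
      show ?case
      proof (cases "span_list F xs = V")
        case True then show ?thesis using less.prems by blast
      next
        case False
        then obtain v where v: "v \<in> V" "v \<notin> span_list F xs" using sub by blast
        have ind': "indep_list F (xs @ [v])" using indep_append[OF F less.prems(1) v(2)] .
        have set': "set (xs @ [v]) \<subseteq> V" using less.prems(2) v by auto
        have "span_list F xs \<subset> span_list F (xs @ [v])"
          using span_append_mono[of F xs v] span_append_in[of F v xs] F v(2)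
          by (auto simp: is_subfield_def)
        then have "card (span_list F xs) < card (span_list F (xs @ [v]))"
          by (intro psubset_card_mono) auto
        moreover have "card (span_list F (xs @ [v])) \<le> card (UNIV :: 'a set)"
          by (intro card_mono) auto
        ultimately have "card (UNIV::'a set) - card (span_list F (xs @ [v])) < card (UNIV::'a set) - card (span_list F xs)"
          by linarith
        then show ?thesis using less.hyps[OF _ ind' set'] by blast
      qed
    qed
  qed
  have "indep_list F []" by (simp add: indep_list_def)
  then show ?thesis using main[of "[]"] by simp
qed

lemma has_dim_card:
  fixes F V :: "'a::{field,finite} set"
  assumes F: "is_subfield F" and "has_dim F V d"
  shows "card V = card F ^ d"
  using assms card_span_indep[OF F] unfolding has_dim_def by blast

lemma dimK_props:
  fixes F V :: "'a::{field,finite} set"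
  assumes F: "is_subfield F" and V: "is_subspace F V"
  shows "has_dim F V (dimK F V)" "card V = card F ^ dimK F V"
proof -
  obtain xs where xs: "indep_list F xs" "span_list F xs = V" using basis_exists[OF F V] by blast
  have hd: "has_dim F V (length xs)" unfolding has_dim_def using xs by blast
  have uniq: "d = length xs" if "has_dim F V d" for d
  proof -
    have "card F ^ d = card F ^ length xs"
      using has_dim_card[OF F that] has_dim_card[OF F hd] by simp
    moreover have "card F > 1" using subfield_card_ge2[OF F] by simp
    ultimately show ?thesis by simp
  qed
  have "dimK F V = length xs" unfolding dimK_def
    by (rule the_equality[of "has_dim F V", OF hd uniq])
  then show "has_dim F V (dimK F V)" "card V = card F ^ dimK F V"
    using hd has_dim_card[OF F hd] by auto
qed



lemma UNIV_subfield: "is_subfield (UNIV :: 'a::field set)"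
  by (simp add: is_subfield_def)

lemma geom_nat:
  assumes "(q::nat) \<ge> 1"
  shows "(q - 1) * (\<Sum>j<n. q^j) + 1 = q^n"
proof (induction n)
  case 0 then show ?case by simp
next
  case (Suc n)
  have "(q - 1) * (\<Sum>j<Suc n. q^j) + 1 = ((q - 1) * (\<Sum>j<n. q^j) + 1) + (q - 1) * q^n"
    by (simp add: algebra_simps)
  also have "\<dots> = q^n + (q - 1) * q^n" using Suc by simp
  also have "\<dots> = q^Suc n" using assms by (cases q) (simp_all add: algebra_simps)
  finally show ?case .
qed

lemma card_Fq:
  fixes dummy :: "'a::{field,finite}"
  assumes q2: "q \<ge> 2" and n: "n > 0" and cardU: "card (UNIV :: 'a set) = q ^ n"
  shows "card (Fqs q 1 :: 'a set) = q"
proof -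
  have Fq: "(Fqs q 1 :: 'a set) = {x. x^q = x}" by (simp add: Fqs_def)
  define P :: "'a poly" where "P = monom 1 q - monom 1 1"
  have polyP: "poly P x = x^q - x" for x by (simp add: P_def poly_monom)
  have "coeff P q = 1" using q2 by (simp add: P_def coeff_monom)
  then have Pnz: "P \<noteq> 0" by auto
  have degP: "degree P \<le> q" unfolding P_def
    by (rule order.trans[OF degree_diff_le_max]) (use q2 in \<open>auto intro: order.trans[OF degree_monom_le]\<close>)
  have "{x::'a. x^q = x} = {x. poly P x = 0}" by (simp add: polyP)
  then have up: "card {x::'a. x^q = x} \<le> q"
    using card_poly_roots_bound[OF Pnz] degP by simp
  define M where "M = (\<Sum>j<n. q^j)"
  have geo: "(q - 1) * M + 1 = q^n" unfolding M_def using geom_nat q2 by simp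
  have "M \<noteq> 0"
  proof
    assume "M = 0"
    then have "q^n = 1" using geo by simp
    then show False using q2 n by simp
  qed
  then have M1: "M \<ge> 1" by simp
  define h :: "'a poly" where "h = (\<Sum>j<M. monom 1 ((q - 1) * j))"
  have polyh: "poly h x = (\<Sum>j<M. x ^ ((q - 1) * j))" for x by (simp add: h_def poly_sum poly_monom)
  have "poly h 0 = (\<Sum>j<M. if j = 0 then 1 else 0)"
    unfolding polyh using q2 by (intro sum.cong) auto
  also have "\<dots> = 1" using M1 by simp
  finally have hnz: "h \<noteq> 0" by auto
  have degh: "degree h \<le> (q - 1) * (M - 1)" unfolding h_def
    by (rule degree_sum_le) (auto intro!: order.trans[OF degree_monom_le])
  have sub: "UNIV - {x::'a. x^q = x} \<subseteq> {x. poly h x = 0}"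
  proof
    fix x :: 'a assume "x \<in> UNIV - {x. x^q = x}"
    then have nx: "x^q \<noteq> x" by simp
    then have x0: "x \<noteq> 0" using q2 by (auto simp: power_0_left)
    have "x ^ card (UNIV :: 'a set) = x" by (rule subfield_power_card[OF UNIV_subfield]) simp
    then have "x * x ^ ((q - 1) * M) = x * 1"
      using geo cardU by (metis add.commute mult.right_neutral power_Suc plus_1_eq_Suc)
    then have yM: "(x ^ (q - 1)) ^ M = 1" using x0 by (simp add: power_mult)
    have y1: "x ^ (q - 1) \<noteq> 1"
    proof
      assume "x ^ (q - 1) = 1"
      then have "x ^ q = x" using q2 by (metis Suc_diff_1 le_trans mult.right_neutral one_le_numeral
            power_Suc not_less_eq_eq not_one_le_zero neq0_conv)
      then show False using nx by simp
    qed
    have "(x ^ (q - 1) - 1) * (\<Sum>i<M. (x ^ (q - 1))^i) = 0"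
      using power_diff_1_eq[of "x ^ (q - 1)" M] yM by simp
    then have "(\<Sum>i<M. (x ^ (q - 1))^i) = 0" using y1 by simp
    then show "x \<in> {x. poly h x = 0}" unfolding polyh by (simp add: power_mult)
  qed
  have "card (UNIV - {x::'a. x^q = x}) \<le> card {x::'a. poly h x = 0}"
    by (rule card_mono[OF _ sub]) simp
  also have "\<dots> \<le> (q - 1) * (M - 1)" using card_poly_roots_bound[OF hnz] degh by simp
  finally have "card (UNIV :: 'a set) - card {x::'a. x^q = x} \<le> (q - 1) * (M - 1)"
    by (simp add: card_Diff_subset)
  moreover have "(q - 1) * (M - 1) + q = q ^ n"
  proof -
    obtain a where a: "M = Suc a" using M1 by (cases M) auto
    obtain b where b: "q = Suc b" using q2 by (cases q) auto
    have "(q - 1) * (M - 1) + q = (q - 1) * M + 1" by (simp add: a b algebra_simps)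
    then show ?thesis using geo by simp
  qed
  ultimately have "card {x::'a. x^q = x} \<ge> q" using cardU up by linarith
  then show ?thesis using up Fq by simp
qed



lemma adjoin_props:
  fixes K :: "'a::field set"
  shows "is_subfield (adjoin K a)" "K \<subseteq> adjoin K a" "a \<in> adjoin K a"
  unfolding adjoin_def is_subfield_def by auto

lemma Fqs_mono:
  assumes "x \<in> Fqs q 1"
  shows "x \<in> Fqs q s"
proof (induction s)
  case 0 then show ?case by (simp add: Fqs_def)
next
  case (Suc s)
  have "x ^ (q ^ Suc s) = (x ^ q) ^ (q ^ s)" by (simp add: power_mult)
  also have "\<dots> = x" using assms Suc by (simp add: Fqs_def)
  finally show ?case by (simp add: Fqs_def)
qed

lemma subfield_pow:
  assumes "is_subfield F" "x \<in> F"
  shows "x ^ i \<in> F"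
  using assms by (induction i) (auto simp: is_subfield_def)

lemma scale_eq:
  fixes S :: "'a::{field,finite} set"
  assumes "x \<noteq> 0" "\<forall>s\<in>S. x * s \<in> S"
  shows "scale_set x S = S"
proof -
  have sub: "scale_set x S \<subseteq> S" using assms by (auto simp: scale_set_def)
  have "inj_on (\<lambda>s. x * s) S" using assms(1) by (auto simp: inj_on_def)
  then have "card (scale_set x S) = card S" by (simp add: scale_set_def card_image)
  then show ?thesis using sub by (intro card_subset_eq) auto
qed



theorem lemma4p8:
  fixes lam b :: "'a::{field,finite}"
    and Sbar :: "'a set"
    and q n t l m k r :: nat
  assumes q_pp: "\<exists>p e. prime p \<and> e > 0 \<and> q = p ^ e"
    and n_pos: "n > 0"
    and card_field: "card (UNIV :: 'a set) = q ^ n"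
    and lam_notin: "lam \<notin> Fqs q 1"
    and t_def: "t = dimK (Fqs q 1) (adjoin (Fqs q 1) lam)"
    and Sbar_sub: "is_subspace (Fqs q t) Sbar"
    and Sbar_dim: "has_dim (Fqs q t) Sbar l"
    and l_pos: "l > 0"
    and b_nz: "b \<noteq> 0"
    and b_int: "Fqs q t \<inter> scale_set b Sbar = {0}"
    and m_bounds: "0 < m" "m < t"
    and k_def: "k = t * l + m"
    and k_bounds: "t + 1 \<le> k" "k \<le> n"
    and direct: "Sbar \<inter> scale_set b (span_list (Fqs q 1) (map (\<lambda>i. lam ^ i) [0..<m])) = {0}"
    and Y_full: "span_set (Fqs q t)
        (set_plus Sbar (scale_set b (span_list (Fqs q 1) (map (\<lambda>i. lam ^ i) [0..<m])))) = UNIV"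
    and m_ineq: "2 * m + 1 \<ge> t"
    and r_def: "r = 2 * m + t * (l - 1)"
    and fws: "is_FWS (Fqs q 1) r
        (set_plus Sbar (scale_set b (span_list (Fqs q 1) (map (\<lambda>i. lam ^ i) [0..<m]))))"
  shows "stab Sbar = Fqs q t"
proof -
  obtain p e where pe: "prime p" "e > 0" "q = p ^ e" using q_pp by blast
  have charp: "CHAR('a) = p" using char_eq[OF pe(1,2) _ n_pos] card_field pe(3) by simp
  have q2: "q \<ge> 2"
  proof -
    have "p \<ge> 2" using pe(1) prime_ge_2_nat by blast
    moreover have "p ^ 1 \<le> p ^ e" using pe(2) \<open>p \<ge> 2\<close> by (intro power_increasing) auto
    ultimately show ?thesis using pe(3) by simp
  qed
  define T :: "'a set" where "T = Fqs q t"
  define Fq :: "'a set" where "Fq = Fqs q 1"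
  have sfT: "is_subfield T" unfolding T_def using Fqs_subfield[OF charp pe(1,3)] .
  have sfFq: "is_subfield Fq" unfolding Fq_def using Fqs_subfield[OF charp pe(1,3)] .
  have FqT: "Fq \<subseteq> T" unfolding Fq_def T_def using Fqs_mono by blast
  have cardFq: "card Fq = q" unfolding Fq_def using card_Fq[OF q2 n_pos card_field] .
  have lamT: "lam \<in> T"
  proof -
    define K where "K = adjoin Fq lam"
    have sfK: "is_subfield K" "Fq \<subseteq> K" "lam \<in> K" unfolding K_def by (rule adjoin_props)+
    have "is_subspace Fq K" using sfK unfolding is_subspace_def is_subfield_def by blast
    then have "card K = card Fq ^ dimK Fq K" using dimK_props[OF sfFq] by blast
    also have "dimK Fq K = t" unfolding K_def Fq_def t_def ..
    finally have "card K = q ^ t" using cardFq by simp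
    then have "lam ^ (q ^ t) = lam" using subfield_power_card[OF sfK(1) sfK(3)] by simp
    then show ?thesis unfolding T_def Fqs_def by simp
  qed
  define L where "L = span_list Fq (map (\<lambda>i. lam ^ i) [0..<m])"
  have LT: "L \<subseteq> T"
  proof
    fix w assume "w \<in> L"
    then obtain c where c: "\<forall>i<m. c i \<in> Fq" and w: "w = (\<Sum>i<m. c i * (map (\<lambda>i. lam ^ i) [0..<m]) ! i)"
      unfolding L_def span_list_def by auto
    have "\<forall>i\<in>{..<m}. c i * (map (\<lambda>i. lam ^ i) [0..<m]) ! i \<in> T"
    proof
      fix i assume i: "i \<in> {..<m}"
      have "c i \<in> T" using c i FqT by auto
      moreover have "lam ^ i \<in> T" using subfield_pow[OF sfT lamT] .
      ultimately show "c i * (map (\<lambda>i. lam ^ i) [0..<m]) ! i \<in> T"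
        using i sfT unfolding is_subfield_def by simp
    qed
    then show "w \<in> T" unfolding w using sfT by (intro sum_in_closed) (auto simp: is_subfield_def)
  qed
  have oneL: "1 \<in> L"
  proof -
    let ?c = "\<lambda>i. if i = 0 then 1 else (0::'a)"
    have "(\<Sum>i<length (map (\<lambda>i. lam ^ i) [0..<m]). ?c i * (map (\<lambda>i. lam ^ i) [0..<m]) ! i) = 1"
    proof -
      have "(\<Sum>i<length (map (\<lambda>i. lam ^ i) [0..<m]). ?c i * (map (\<lambda>i. lam ^ i) [0..<m]) ! i)
          = (\<Sum>i<m. if i = 0 then 1 else 0)" by (intro sum.cong) auto
      also have "\<dots> = 1" using m_bounds(1) by simp
      finally show ?thesis .
    qed
    moreover have "\<forall>i<length (map (\<lambda>i. lam ^ i) [0..<m]). ?c i \<in> Fq"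
      using sfFq by (auto simp: is_subfield_def)
    ultimately show ?thesis unfolding L_def span_list_def by (intro CollectI exI[of _ ?c]) simp
  qed
  have bL: "b \<in> scale_set b L" using oneL unfolding scale_set_def by force
  have S0: "0 \<in> Sbar" and Sadd: "\<And>x y. x \<in> Sbar \<Longrightarrow> y \<in> Sbar \<Longrightarrow> x + y \<in> Sbar"
    and Smul: "\<And>c x. c \<in> T \<Longrightarrow> x \<in> Sbar \<Longrightarrow> c * x \<in> Sbar"
    using Sbar_sub unfolding is_subspace_def T_def by auto
  have Sneg: "- x \<in> Sbar" if "x \<in> Sbar" for x
  proof -
    have "-1 \<in> T" using sfT unfolding is_subfield_def by blast
    then show ?thesis using Smul[OF _ that] by fastforce
  qed
  have bTdisj: "c = 0" if "c \<in> T" "b * c \<in> Sbar" for c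
  proof (rule ccontr)
    assume c0: "c \<noteq> 0"
    have "inverse c \<in> T" using sfT that(1) unfolding is_subfield_def by blast
    then have "inverse c * (b * c) \<in> Sbar" using Smul that(2) by blast
    then have "b \<in> Sbar" using c0 by (simp add: field_simps)
    then have "b \<in> Sbar \<inter> scale_set b L" using bL by blast
    then show False using direct b_nz unfolding L_def Fq_def by blast
  qed
  \<comment> \<open>UNIV = Sbar + bT, direct\<close>
  define f where "f = (\<lambda>(s, c). s + b * c)"
  define V where "V = f ` (Sbar \<times> T)"
  have Vsub: "is_subspace T V"
    unfolding is_subspace_def
  proof (intro conjI ballI)
    show "0 \<in> V" unfolding V_def f_def using S0 sfT
      by (intro image_eqI[of _ _ "(0,0)"]) (auto simp: is_subfield_def)
  next
    fix x y assume "x \<in> V" "y \<in> V"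
    then obtain s c s' c' where "x = s + b * c" "y = s' + b * c'" "s \<in> Sbar" "c \<in> T" "s' \<in> Sbar" "c' \<in> T"
      unfolding V_def f_def by auto
    moreover have "x + y = f (s + s', c + c')" using calculation by (simp add: f_def algebra_simps)
    ultimately show "x + y \<in> V" unfolding V_def using Sadd sfT
      by (intro image_eqI[of _ _ "(s + s', c + c')"]) (auto simp: is_subfield_def)
  next
    fix a x assume a: "a \<in> T" and "x \<in> V"
    then obtain s c where "x = s + b * c" "s \<in> Sbar" "c \<in> T"
      unfolding V_def f_def by auto
    moreover have "a * x = f (a * s, a * c)" using calculation by (simp add: f_def algebra_simps)
    ultimately show "a * x \<in> V" unfolding V_def using Smul a sfT
      by (intro image_eqI[of _ _ "(a * s, a * c)"]) (auto simp: is_subfield_def)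
  qed
  have SV: "set_plus Sbar (scale_set b L) \<subseteq> V"
  proof
    fix x assume "x \<in> set_plus Sbar (scale_set b L)"
    then obtain s w where "x = s + b * w" "s \<in> Sbar" "w \<in> L"
      unfolding set_plus_def scale_set_def by auto
    then show "x \<in> V" unfolding V_def f_def using LT
      by (intro image_eqI[of _ _ "(s, w)"]) auto
  qed
  have UV: "UNIV \<subseteq> V"
  proof -
    have "span_set T (set_plus Sbar (scale_set b L)) \<subseteq> V"
      unfolding span_set_def using Vsub SV by blast
    then show ?thesis using Y_full unfolding T_def L_def Fq_def by simp
  qed
  have injf: "inj_on f (Sbar \<times> T)"
  proof (rule inj_onI)
    fix x y assume x: "x \<in> Sbar \<times> T" and y: "y \<in> Sbar \<times> T" and eq: "f x = f y"
    obtain s c where sc: "x = (s, c)" "s \<in> Sbar" "c \<in> T" using x by auto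
    obtain s' c' where sc': "y = (s', c')" "s' \<in> Sbar" "c' \<in> T" using y by auto
    have e: "s + b * c = s' + b * c'" using eq sc sc' by (simp add: f_def)
    have "- c' \<in> T" using sfT sc'(3) unfolding is_subfield_def by blast
    then have "c + - c' \<in> T" using sfT sc(3) unfolding is_subfield_def by blast
    then have cT: "c - c' \<in> T" by simp
    have "b * (c - c') = s' + - s" using e by (simp add: algebra_simps)
    then have "b * (c - c') \<in> Sbar" using Sadd[OF sc'(2) Sneg[OF sc(2)]] by simp
    with cT have "c - c' = 0" using bTdisj by blast
    then show "x = y" using e sc sc' by simp
  qed
  have cardU: "card (UNIV :: 'a set) = card Sbar * card T"
  proof -
    have "V = UNIV" using UV by blast
    then have "card (UNIV :: 'a set) = card (Sbar \<times> T)" unfolding V_def using card_image[OF injf] by simp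
    then show ?thesis by (simp add: card_cartesian_product)
  qed
  define H where "H = {x. \<forall>s\<in>Sbar. x * s \<in> Sbar}"
  have stabH: "stab Sbar = H"
  proof
    show "stab Sbar \<subseteq> H" unfolding stab_def H_def scale_set_def using S0 by auto
  next
    show "H \<subseteq> stab Sbar"
    proof
      fix x assume "x \<in> H"
      then show "x \<in> stab Sbar" using scale_eq[of x Sbar] unfolding H_def stab_def by auto
    qed
  qed
  have sfH: "is_subfield H"
    unfolding is_subfield_def
  proof (intro conjI ballI)
    fix x y assume x: "x \<in> H" and y: "y \<in> H"
    show "x + y \<in> H" using x y Sadd unfolding H_def by (simp add: distrib_right)
    show "x * y \<in> H" using x y unfolding H_def by (simp add: mult.assoc)
  next
    fix x assume x: "x \<in> H"
    show "- x \<in> H" using x Sneg unfolding H_def by simp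
    show "inverse x \<in> H"
    proof (cases "x = 0")
      case True then show ?thesis using S0 unfolding H_def by simp
    next
      case False
      have eqS: "scale_set x Sbar = Sbar" using scale_eq[of x Sbar] False x unfolding H_def by simp
      show ?thesis unfolding H_def
      proof (intro CollectI ballI)
        fix s assume "s \<in> Sbar"
        then obtain s' where "s' \<in> Sbar" "s = x * s'" using eqS unfolding scale_set_def by auto
        then show "inverse x * s \<in> Sbar" using False by (simp add: mult.assoc[symmetric])
      qed
    qed
  qed (use S0 in \<open>auto simp: H_def\<close>)
  have TH: "T \<subseteq> H" unfolding H_def using Smul by blast
  have SH: "is_subspace H Sbar" unfolding is_subspace_def H_def using S0 Sadd by blast
  have UH: "is_subspace H (UNIV :: 'a set)" unfolding is_subspace_def by simp
  obtain a where a: "card Sbar = card H ^ a" using dimK_props(2)[OF sfH SH] by blast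
  obtain c where c: "card (UNIV :: 'a set) = card H ^ c" using dimK_props(2)[OF sfH UH] by blast
  have eqn: "card H ^ c = card H ^ a * card T" using cardU a c by simp
  have tau2: "card T \<ge> 2" using subfield_card_ge2[OF sfT] .
  have tauh: "card T \<le> card H" using TH by (intro card_mono) auto
  have h1: "card H \<ge> 1" using tau2 tauh by simp
  have ca: "c > a"
  proof (rule ccontr)
    assume "\<not> c > a"
    then have "card H ^ c \<le> card H ^ a" using h1 by (intro power_increasing) auto
    moreover have "card H ^ a * 1 < card H ^ a * card T" using tau2 h1 by (intro mult_strict_left_mono) auto
    ultimately show False using eqn by simp
  qed
  have "card H ^ a * card H ^ (c - a) = card H ^ a * card T"
    using eqn ca by (simp add: power_add[symmetric])
  moreover have "card H ^ a > 0" using h1 by simp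
  ultimately have "card T = card H ^ (c - a)" by (metis mult_left_cancel not_gr0)
  moreover have "card H ^ 1 \<le> card H ^ (c - a)" using ca h1 by (intro power_increasing) auto
  ultimately have "card T = card H" using tauh by simp
  then have "T = H" using TH by (intro card_subset_eq) auto
  then show ?thesis using stabH unfolding T_def by simp
qed


end
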